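(* Let $U$ be a commutative supertropical semiring, $M:=eU$, $\gamma:M\to N$ a surjective homomorphism onto a bipotent semiring $N$, $V:=U/F(U,\gamma)$, and $\alpha:=\sigma_V\circ\pi_{F(U,\gamma)}:U\to\hat V$ (the initial transmission from $U$ to a supertropical semiring covering $\gamma$). Then for $x_1,x_2\in U$ we have $\alpha(x_1)=\alpha(x_2)$ if and only if either $x_1=x_2$, or $x_1,x_2\in D(U,\gamma)$ and $\gamma(ex_1)=\gamma(ex_2)$, or $\gamma(ex_1)=\gamma(ex_2)=0$.
   Context: All monoids are commutative. A supertropical monoid is a monoid $(U,\cdot)$ with absorbing element $0$ and distinguished idempotent $e$ with $ex=0\Rightarrow x=0$, together with a total ordering on $M:=eU$, compatible with multiplication and with $0$ least, making $M$ a bipotent semiring (addition $=\max$). A supertropical semiring is a supertropical monoid for which the addition $x+y:=y$ if $ex<ey$, $x$ if $ex>ey$, $ex$ if $ex=ey$ is associative and distributive. For a TE-relation $E$, $U/E$ carries the unique supertropical monoid structure making $\pi_E$ a transmission (multiplicative map preserving $0,1,e$ and order on ghosts). $F(U,\gamma)$: $x\sim y$ iff $x=y$, or $x,y\in M$ with $\gamma(x)=\gamma(y)$, or $\gamma(ex)=\gamma(ey)=0$; ghost ideal of $U/F(U,\gamma)$ identified with $N$. For a supertropical monoid $V$ with ghost ideal $N$: $D(V):=N\cup\{yz: y,z\in V,\ \exists y'\in N,\ y'<ey,\ y'z=eyz\}$; $\hat V:=V/E(V,D(V))$ where $x\sim y$ iff $x=y$ or ($x,y\in D(V)$, $ex=ey$);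 $\sigma_V$ the projection. A $\gamma$-NC-product in $U$ is an element $x=yz$ with $y,z\in U$ such that some $y'\in M$ satisfies $\gamma(y')<\gamma(ey)$ and $\gamma(y'z)=\gamma(eyz)$; $D(U,\gamma):=M\cup\{\gamma\text{-NC-products}\}$. *)

theory Defs
  imports Main
begin

text \<open>A (commutative) monoid with absorbing zero and distinguished idempotent e,
  together with an order on the ghost ideal M = eU.\<close>
record 'a stmon =
  car   :: "'a set"
  smul  :: "'a \<Rightarrow> 'a \<Rightarrow> 'a"
  sone  :: 'a
  szero :: 'a
  se    :: 'a
  sgle  :: "'a \<Rightarrow> 'a \<Rightarrow> bool"

definition ghosts :: "('a, 'b) stmon_scheme \<Rightarrow> 'a set" where
  "ghosts U = {smul U (se U) x | x. x \<in> car U}"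

definition sgless :: "('a, 'b) stmon_scheme \<Rightarrow> 'a \<Rightarrow> 'a \<Rightarrow> bool" where
  "sgless U x y \<longleftrightarrow> sgle U x y \<and> x \<noteq> y"

definition supertropical_monoid :: "('a, 'b) stmon_scheme \<Rightarrow> bool" where
  "supertropical_monoid U \<longleftrightarrow>
     sone U \<in> car U \<and> szero U \<in> car U \<and> se U \<in> car U \<and>
     (\<forall>x\<in>car U. \<forall>y\<in>car U. smul U x y \<in> car U) \<and>
     (\<forall>x\<in>car U. \<forall>y\<in>car U. \<forall>z\<in>car U. smul U (smul U x y) z = smul U x (smul U y z)) \<and>
     (\<forall>x\<in>car U. \<forall>y\<in>car U. smul U x y = smul U y x) \<and>
     (\<forall>x\<in>car U. smul U (sone U) x = x) \<and>
     (\<forall>x\<in>car U. smul U (szero U) x = szero U) \<and>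
     smul U (se U) (se U) = se U \<and>
     (\<forall>x\<in>car U. smul U (se U) x = szero U \<longrightarrow> x = szero U) \<and>
     \<comment> \<open>total ordering on M = eU\<close>
     (\<forall>x\<in>ghosts U. sgle U x x) \<and>
     (\<forall>x\<in>ghosts U. \<forall>y\<in>ghosts U. sgle U x y \<longrightarrow> sgle U y x \<longrightarrow> x = y) \<and>
     (\<forall>x\<in>ghosts U. \<forall>y\<in>ghosts U. \<forall>z\<in>ghosts U. sgle U x y \<longrightarrow> sgle U y z \<longrightarrow> sgle U x z) \<and>
     (\<forall>x\<in>ghosts U. \<forall>y\<in>ghosts U. sgle U x y \<or> sgle U y x) \<and>
     \<comment> \<open>compatible with multiplication, 0 least (so M is bipotent with + = max)\<close>
     (\<forall>x\<in>ghosts U. \<forall>y\<in>ghosts U. \<forall>z\<in>ghosts U. sgle U x y \<longrightarrow> sgle U (smul U x z) (smul U y z)) \<and>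
     (\<forall>x\<in>ghosts U. sgle U (szero U) x)"

text \<open>The supertropical addition determined by the monoid structure.\<close>
definition st_add :: "('a, 'b) stmon_scheme \<Rightarrow> 'a \<Rightarrow> 'a \<Rightarrow> 'a" where
  "st_add U x y =
     (if sgless U (smul U (se U) x) (smul U (se U) y) then y
      else if sgless U (smul U (se U) y) (smul U (se U) x) then x
      else smul U (se U) x)"

definition supertropical_semiring :: "('a, 'b) stmon_scheme \<Rightarrow> bool" where
  "supertropical_semiring U \<longleftrightarrow> supertropical_monoid U \<and>
     (\<forall>x\<in>car U. \<forall>y\<in>car U. \<forall>z\<in>car U. st_add U (st_add U x y) z = st_add U x (st_add U y z)) \<and>
     (\<forall>x\<in>car U. \<forall>y\<in>car U. \<forall>z\<in>car U. smul U x (st_add U y z) = st_add U (smul U x y) (smul U x z))"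

definition gmax :: "('a, 'b) stmon_scheme \<Rightarrow> 'a \<Rightarrow> 'a \<Rightarrow> 'a" where
  "gmax U x y = (if sgle U x y then y else x)"

record 'b bsr =
  bcar  :: "'b set"
  badd  :: "'b \<Rightarrow> 'b \<Rightarrow> 'b"
  bmul  :: "'b \<Rightarrow> 'b \<Rightarrow> 'b"
  bzero :: 'b
  bone  :: 'b

definition bipotent_semiring :: "'b bsr \<Rightarrow> bool" where
  "bipotent_semiring N \<longleftrightarrow>
     bzero N \<in> bcar N \<and> bone N \<in> bcar N \<and>
     (\<forall>a\<in>bcar N. \<forall>b\<in>bcar N. badd N a b \<in> bcar N \<and> bmul N a b \<in> bcar N) \<and>
     (\<forall>a\<in>bcar N. \<forall>b\<in>bcar N. \<forall>c\<in>bcar N. badd N (badd N a b) c = badd N a (badd N b c)) \<and>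
     (\<forall>a\<in>bcar N. \<forall>b\<in>bcar N. badd N a b = badd N b a) \<and>
     (\<forall>a\<in>bcar N. badd N (bzero N) a = a) \<and>
     (\<forall>a\<in>bcar N. \<forall>b\<in>bcar N. \<forall>c\<in>bcar N. bmul N (bmul N a b) c = bmul N a (bmul N b c)) \<and>
     (\<forall>a\<in>bcar N. \<forall>b\<in>bcar N. bmul N a b = bmul N b a) \<and>
     (\<forall>a\<in>bcar N. bmul N (bone N) a = a) \<and>
     (\<forall>a\<in>bcar N. bmul N (bzero N) a = bzero N) \<and>
     (\<forall>a\<in>bcar N. \<forall>b\<in>bcar N. \<forall>c\<in>bcar N. bmul N a (badd N b c) = badd N (bmul N a b) (bmul N a c)) \<and>
     (\<forall>a\<in>bcar N. \<forall>b\<in>bcar N. badd N a b = a \<or> badd N a b = b)"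

definition bless :: "'b bsr \<Rightarrow> 'b \<Rightarrow> 'b \<Rightarrow> bool" where
  "bless N a b \<longleftrightarrow> badd N a b = b \<and> a \<noteq> b"

definition ghost_hom :: "('a, 'c) stmon_scheme \<Rightarrow> 'b bsr \<Rightarrow> ('a \<Rightarrow> 'b) \<Rightarrow> bool" where
  "ghost_hom U N \<gamma> \<longleftrightarrow>
     (\<forall>x\<in>ghosts U. \<gamma> x \<in> bcar N) \<and>
     \<gamma> (szero U) = bzero N \<and> \<gamma> (se U) = bone N \<and>
     (\<forall>x\<in>ghosts U. \<forall>y\<in>ghosts U. \<gamma> (smul U x y) = bmul N (\<gamma> x) (\<gamma> y)) \<and>
     (\<forall>x\<in>ghosts U. \<forall>y\<in>ghosts U. \<gamma> (gmax U x y) = badd N (\<gamma> x) (\<gamma> y))"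

text \<open>The supertropical monoid structure on U/E making \<pi>_E a transmission:
  classes are multiplied via representatives, and the order on ghost classes is
  the image order.\<close>
definition quot :: "('a, 'c) stmon_scheme \<Rightarrow> ('a \<times> 'a) set \<Rightarrow> 'a set stmon" where
  "quot U E =
    \<lparr> car = car U // E,
      smul = (\<lambda>X Y. E `` {smul U (SOME x. x \<in> X) (SOME y. y \<in> Y)}),
      sone = E `` {sone U},
      szero = E `` {szero U},
      se = E `` {se U},
      sgle = (\<lambda>X Y. \<exists>x\<in>X. \<exists>y\<in>Y. x \<in> ghosts U \<and> y \<in> ghosts U \<and> sgle U x y) \<rparr>"

definition proj :: "('a \<times> 'a) set \<Rightarrow> 'a \<Rightarrow> 'a set" where
  "proj E x = E `` {x}"

definition Frel :: "('a, 'c) stmon_scheme \<Rightarrow> 'b bsr \<Rightarrow> ('a \<Rightarrow> 'b) \<Rightarrow> ('a \<times> 'a) set" where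
  "Frel U N \<gamma> = {(x, y). x \<in> car U \<and> y \<in> car U \<and>
     (x = y \<or> (x \<in> ghosts U \<and> y \<in> ghosts U \<and> \<gamma> x = \<gamma> y) \<or>
      (\<gamma> (smul U (se U) x) = bzero N \<and> \<gamma> (smul U (se U) y) = bzero N))}"

definition Dset :: "('a, 'c) stmon_scheme \<Rightarrow> 'a set" where
  "Dset V = ghosts V \<union>
     {smul V y z | y z. y \<in> car V \<and> z \<in> car V \<and>
        (\<exists>y'\<in>ghosts V. sgless V y' (smul V (se V) y) \<and>
           smul V y' z = smul V (smul V (se V) y) z)}"

definition Erel :: "('a, 'c) stmon_scheme \<Rightarrow> 'a set \<Rightarrow> ('a \<times> 'a) set" where
  "Erel V D = {(x, y). x \<in> car V \<and> y \<in> car V \<and>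
     (x = y \<or> (x \<in> D \<and> y \<in> D \<and> smul V (se V) x = smul V (se V) y))}"

definition hat :: "('a, 'c) stmon_scheme \<Rightarrow> 'a set stmon" where
  "hat V = quot V (Erel V (Dset V))"

definition sigma :: "('a, 'c) stmon_scheme \<Rightarrow> 'a \<Rightarrow> 'a set" where
  "sigma V = proj (Erel V (Dset V))"

definition alpha :: "('a, 'c) stmon_scheme \<Rightarrow> 'b bsr \<Rightarrow> ('a \<Rightarrow> 'b) \<Rightarrow> 'a \<Rightarrow> 'a set set" where
  "alpha U N \<gamma> = sigma (quot U (Frel U N \<gamma>)) \<circ> proj (Frel U N \<gamma>)"

definition DUgamma :: "('a, 'c) stmon_scheme \<Rightarrow> 'b bsr \<Rightarrow> ('a \<Rightarrow> 'b) \<Rightarrow> 'a set" where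
  "DUgamma U N \<gamma> = ghosts U \<union>
     {smul U y z | y z. y \<in> car U \<and> z \<in> car U \<and>
        (\<exists>y'\<in>ghosts U. bless N (\<gamma> y') (\<gamma> (smul U (se U) y)) \<and>
           \<gamma> (smul U y' z) = \<gamma> (smul U (smul U (se U) y) z))}"

end

theory Submission
  imports Defs
begin

lemma Erel_equiv: "equiv (car V) (Erel V D)"
  by (rule equivI) (auto simp: Erel_def refl_on_def sym_def trans_def)

locale ctx =
  fixes U :: "'a stmon" and N :: "'b bsr" and g :: "'a \<Rightarrow> 'b"
  assumes stm: "supertropical_monoid U" and bsr: "bipotent_semiring N"
    and gh: "ghost_hom U N g"
begin

abbreviation F where "F \<equiv> Frel U N g"
abbreviation V where "V \<equiv> quot U F"

lemma closed: "x \<in> car U \<Longrightarrow> y \<in> car U \<Longrightarrow> smul U x y \<in> car U"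
  using stm unfolding supertropical_monoid_def by (elim conjE) blast
lemma assoc: "x \<in> car U \<Longrightarrow> y \<in> car U \<Longrightarrow> z \<in> car U \<Longrightarrow> smul U (smul U x y) z = smul U x (smul U y z)"
  using stm unfolding supertropical_monoid_def by (elim conjE) blast
lemma comm: "x \<in> car U \<Longrightarrow> y \<in> car U \<Longrightarrow> smul U x y = smul U y x"
  using stm unfolding supertropical_monoid_def by (elim conjE) blast
lemma e_car: "se U \<in> car U"
  using stm unfolding supertropical_monoid_def by (elim conjE) blast
lemma ee: "smul U (se U) (se U) = se U"
  using stm unfolding supertropical_monoid_def by (elim conjE) blast

lemma ghostsI: "x \<in> car U \<Longrightarrow> smul U (se U) x \<in> ghosts U"
  unfolding ghosts_def by blast

lemma ghostsD: "a \<in> ghosts U \<Longrightarrow> a \<in> car U \<and> smul U (se U) a = a"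
proof -
  assume "a \<in> ghosts U"
  then obtain x where x: "x \<in> car U" "a = smul U (se U) x" unfolding ghosts_def by blast
  have "smul U (se U) a = smul U (smul U (se U) (se U)) x"
    using x e_car assoc by simp
  then show ?thesis using x ee closed e_car by simp
qed

lemma ghost_mul: "a \<in> ghosts U \<Longrightarrow> u \<in> car U \<Longrightarrow> smul U a u \<in> ghosts U"
proof -
  assume a: "a \<in> ghosts U" and u: "u \<in> car U"
  then obtain x where x: "x \<in> car U" "a = smul U (se U) x" unfolding ghosts_def by blast
  have "smul U a u = smul U (se U) (smul U x u)" using x u e_car assoc by simp
  then show ?thesis using ghostsI closed x u by simp
qed

lemma ghost_mul_e: "a \<in> ghosts U \<Longrightarrow> u \<in> car U \<Longrightarrow> smul U a (smul U (se U) u) = smul U a u"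
proof -
  assume a: "a \<in> ghosts U" and u: "u \<in> car U"
  have ac: "a \<in> car U" "smul U (se U) a = a" using ghostsD a by auto
  have "smul U a (smul U (se U) u) = smul U (smul U a (se U)) u" using ac u e_car assoc by simp
  also have "smul U a (se U) = smul U (se U) a" using comm ac e_car by simp
  finally show ?thesis using ac by simp
qed

lemma e_ghost_idem: "x \<in> car U \<Longrightarrow> smul U (se U) (smul U (se U) x) = smul U (se U) x"
  using ghostsD ghostsI by blast

lemma g_car: "a \<in> ghosts U \<Longrightarrow> g a \<in> bcar N"
  using gh unfolding ghost_hom_def by blast
lemma g_mul: "a \<in> ghosts U \<Longrightarrow> b \<in> ghosts U \<Longrightarrow> g (smul U a b) = bmul N (g a) (g b)"
  using gh unfolding ghost_hom_def by blast
lemma g_max: "a \<in> ghosts U \<Longrightarrow> b \<in> ghosts U \<Longrightarrow> g (gmax U a b) = badd N (g a) (g b)"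
  using gh unfolding ghost_hom_def by blast
lemma bzero_mul: "a \<in> bcar N \<Longrightarrow> bmul N (bzero N) a = bzero N"
  using bsr unfolding bipotent_semiring_def by blast
lemma badd_comm: "a \<in> bcar N \<Longrightarrow> b \<in> bcar N \<Longrightarrow> badd N a b = badd N b a"
  using bsr unfolding bipotent_semiring_def by blast
lemma sgle_total: "a \<in> ghosts U \<Longrightarrow> b \<in> ghosts U \<Longrightarrow> sgle U a b \<or> sgle U b a"
  using stm unfolding supertropical_monoid_def by (elim conjE) blast

lemma mono: "a \<in> ghosts U \<Longrightarrow> b \<in> ghosts U \<Longrightarrow> sgle U a b \<Longrightarrow> badd N (g a) (g b) = g b"
  using g_max unfolding gmax_def by force

lemma Fg: "(x, y) \<in> F \<Longrightarrow> g (smul U (se U) x) = g (smul U (se U) y)"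
  unfolding Frel_def using ghostsD by auto

lemma F_equiv: "equiv (car U) F"
proof (rule equivI)
  show "F \<subseteq> car U \<times> car U" unfolding Frel_def by auto
  show "refl_on (car U) F" unfolding Frel_def refl_on_def by auto
  show "sym F" unfolding Frel_def sym_def by auto
  show "trans F"
  proof (rule transI)
    fix x y z assume xy: "(x, y) \<in> F" and yz: "(y, z) \<in> F"
    have g1: "g (smul U (se U) x) = g (smul U (se U) y)" using Fg xy .
    have g2: "g (smul U (se U) y) = g (smul U (se U) z)" using Fg yz .
    show "(x, z) \<in> F" using xy yz g1 g2 unfolding Frel_def by auto
  qed
qed

lemma F_cong1: "(x, x') \<in> F \<Longrightarrow> z \<in> car U \<Longrightarrow> (smul U x z, smul U x' z) \<in> F"
proof -
  assume xx: "(x, x') \<in> F" and z: "z \<in> car U"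
  have xc: "x \<in> car U" "x' \<in> car U" using xx unfolding Frel_def by auto
  have ez: "smul U (se U) z \<in> ghosts U" using ghostsI z .
  consider "x = x'" | "x \<in> ghosts U" "x' \<in> ghosts U" "g x = g x'"
    | "g (smul U (se U) x) = bzero N" "g (smul U (se U) x') = bzero N"
    using xx unfolding Frel_def by auto
  then show ?thesis
  proof cases
    case 1 then show ?thesis using xc z closed unfolding Frel_def by auto
  next
    case 2
    have "g (smul U x z) = bmul N (g x) (g (smul U (se U) z))"
      using ghost_mul_e[OF 2(1) z] g_mul[OF 2(1) ez] by simp
    moreover have "g (smul U x' z) = bmul N (g x') (g (smul U (se U) z))"
      using ghost_mul_e[OF 2(2) z] g_mul[OF 2(2) ez] by simp
    ultimately show ?thesis using 2 ghost_mul z xc closed unfolding Frel_def by auto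
  next
    case 3
    have h: "smul U (se U) (smul U w z) = smul U (smul U (se U) w) (smul U (se U) z)"
      if w: "w \<in> car U" for w
    proof -
      have "smul U (se U) (smul U w z) = smul U (smul U (se U) w) z" using assoc w z e_car by simp
      then show ?thesis using ghost_mul_e[OF ghostsI[OF w] z] by simp
    qed
    have "g (smul U (se U) (smul U x z)) = bzero N"
      using h[OF xc(1)] g_mul[OF ghostsI[OF xc(1)] ez] 3 bzero_mul g_car[OF ez] by simp
    moreover have "g (smul U (se U) (smul U x' z)) = bzero N"
      using h[OF xc(2)] g_mul[OF ghostsI[OF xc(2)] ez] 3 bzero_mul g_car[OF ez] by simp
    ultimately show ?thesis using xc z closed unfolding Frel_def by auto
  qed
qed

lemma F_cong: "(x, x') \<in> F \<Longrightarrow> (y, y') \<in> F \<Longrightarrow> (smul U x y, smul U x' y') \<in> F"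
proof -
  assume xx: "(x, x') \<in> F" and yy: "(y, y') \<in> F"
  have c: "x \<in> car U" "x' \<in> car U" "y \<in> car U" "y' \<in> car U" using xx yy unfolding Frel_def by auto
  have "(smul U x y, smul U x' y) \<in> F" using F_cong1 xx c by simp
  moreover have "(smul U y x', smul U y' x') \<in> F" using F_cong1 yy c by simp
  then have "(smul U x' y, smul U x' y') \<in> F" using comm c by simp
  ultimately show ?thesis using F_equiv unfolding equiv_def trans_def by blast
qed

lemma mulV: "x \<in> car U \<Longrightarrow> y \<in> car U \<Longrightarrow> smul V (F``{x}) (F``{y}) = F``{smul U x y}"
proof -
  assume x: "x \<in> car U" and y: "y \<in> car U"
  define a where "a = (SOME a. a \<in> F``{x})"
  define b where "b = (SOME b. b \<in> F``{y})"
  have "a \<in> F``{x}" unfolding a_def using equiv_class_self[OF F_equiv x] by (rule someI)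
  moreover have "b \<in> F``{y}" unfolding b_def using equiv_class_self[OF F_equiv y] by (rule someI)
  ultimately have "(smul U x y, smul U a b) \<in> F" using F_cong by simp
  then have "F``{smul U a b} = F``{smul U x y}" using equiv_class_eq[OF F_equiv] by simp
  then show ?thesis unfolding quot_def a_def b_def by simp
qed

lemma seV: "se V = F``{se U}" unfolding quot_def by simp
lemma carV: "car V = car U // F" unfolding quot_def by simp

lemma eV: "x \<in> car U \<Longrightarrow> smul V (se V) (F``{x}) = F``{smul U (se U) x}"
  using mulV seV e_car by simp

lemma clsI: "x \<in> car U \<Longrightarrow> F``{x} \<in> car V" using carV quotientI by simp

lemma cls_eq: "x \<in> car U \<Longrightarrow> y \<in> car U \<Longrightarrow> F``{x} = F``{y} \<longleftrightarrow> (x, y) \<in> F"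
  using eq_equiv_class_iff[OF F_equiv] by simp

lemma ghost_cls: "a \<in> ghosts U \<Longrightarrow> F``{a} \<in> ghosts V"
proof -
  assume a: "a \<in> ghosts U"
  have ac: "a \<in> car U" "smul U (se U) a = a" using ghostsD a by auto
  have "smul V (se V) (F``{a}) = F``{a}" using eV ac by simp
  then show ?thesis using clsI[OF ac(1)] unfolding ghosts_def by force
qed

lemma ghostsV_E: "X \<in> ghosts V \<Longrightarrow> \<exists>a\<in>ghosts U. X = F``{a}"
proof -
  assume "X \<in> ghosts V"
  then obtain Y where Y: "Y \<in> car V" "X = smul V (se V) Y" unfolding ghosts_def by blast
  then obtain y where y: "y \<in> car U" "Y = F``{y}" using carV quotientE by metis
  show ?thesis using Y y eV ghostsI by auto
qed

lemma eF_iff: "x \<in> car U \<Longrightarrow> y \<in> car U \<Longrightarrow>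
   (smul U (se U) x, smul U (se U) y) \<in> F \<longleftrightarrow> g (smul U (se U) x) = g (smul U (se U) y)"
  using Fg e_ghost_idem ghostsI closed e_car unfolding Frel_def by auto

lemma cls_ghost_g: "a \<in> ghosts U \<Longrightarrow> x \<in> F``{a} \<Longrightarrow> x \<in> ghosts U \<Longrightarrow> g x = g a"
  using Fg[of a x] ghostsD by auto

lemma sglessV: "a \<in> ghosts U \<Longrightarrow> b \<in> ghosts U \<Longrightarrow>
   sgless V (F``{a}) (F``{b}) \<longleftrightarrow> bless N (g a) (g b)"
proof -
  assume a: "a \<in> ghosts U" and b: "b \<in> ghosts U"
  have ac: "a \<in> car U" "smul U (se U) a = a" "b \<in> car U" "smul U (se U) b = b" using ghostsD a b by auto
  have neq: "F``{a} \<noteq> F``{b} \<longleftrightarrow> g a \<noteq> g b"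
    using cls_eq[OF ac(1) ac(3)] eF_iff[OF ac(1) ac(3)] ac by simp
  have sg: "sgle V (F``{a}) (F``{b}) \<longleftrightarrow>
     (\<exists>x\<in>F``{a}. \<exists>y\<in>F``{b}. x \<in> ghosts U \<and> y \<in> ghosts U \<and> sgle U x y)"
    unfolding quot_def by simp
  show ?thesis
  proof
    assume "sgless V (F``{a}) (F``{b})"
    then have s: "sgle V (F``{a}) (F``{b})" "F``{a} \<noteq> F``{b}" unfolding sgless_def by auto
    then obtain x y where "x \<in> F``{a}" "y\<in>F``{b}" "x \<in> ghosts U" "y \<in> ghosts U" "sgle U x y"
      using sg by blast
    then have "badd N (g a) (g b) = g b" using mono cls_ghost_g a b by metis
    then show "bless N (g a) (g b)" using s neq unfolding bless_def by simp
  next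
    assume bl: "bless N (g a) (g b)"
    have "sgle U a b"
    proof (rule ccontr)
      assume "\<not> sgle U a b"
      then have "sgle U b a" using sgle_total a b by blast
      then have "badd N (g b) (g a) = g a" using mono a b by simp
      then show False using bl badd_comm g_car a b unfolding bless_def by metis
    qed
    then have "sgle V (F``{a}) (F``{b})" using sg equiv_class_self[OF F_equiv] ac a b by blast
    then show "sgless V (F``{a}) (F``{b})" using bl neq unfolding sgless_def bless_def by simp
  qed
qed


lemma ghost_DU: "x \<in> ghosts U \<Longrightarrow> x \<in> DUgamma U N g"
  unfolding DUgamma_def by blast

lemma D1: "x \<in> DUgamma U N g \<Longrightarrow> F``{x} \<in> Dset V"
proof -
  assume "x \<in> DUgamma U N g"
  then consider "x \<in> ghosts U" | y z y' where "y \<in> car U" "z \<in> car U" "x = smul U y z"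
    "y' \<in> ghosts U" "bless N (g y') (g (smul U (se U) y))"
    "g (smul U y' z) = g (smul U (smul U (se U) y) z)"
    unfolding DUgamma_def by blast
  then show ?thesis
  proof cases
    case 1 then show ?thesis using ghost_cls unfolding Dset_def by blast
  next
    case 2
    have yc: "y' \<in> car U" "smul U (se U) y \<in> ghosts U" "smul U (se U) y \<in> car U"
      using ghostsD[OF 2(4)] ghostsI[OF 2(1)] closed e_car 2 by auto
    have X: "F``{x} = smul V (F``{y}) (F``{z})" using mulV 2 by simp
    have Yg: "F``{y'} \<in> ghosts V" using ghost_cls 2 by simp
    have sl: "sgless V (F``{y'}) (smul V (se V) (F``{y}))"
      using eV[OF 2(1)] sglessV[OF 2(4) yc(2)] 2 by simp
    have "(smul U y' z, smul U (smul U (se U) y) z) \<in> F"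
      using ghost_mul[OF 2(4) 2(2)] ghost_mul[OF yc(2) 2(2)] 2 ghostsD unfolding Frel_def by auto
    then have eq: "smul V (F``{y'}) (F``{z}) = smul V (smul V (se V) (F``{y})) (F``{z})"
      using mulV eV 2 yc cls_eq closed by simp
    show ?thesis unfolding Dset_def using X Yg sl eq clsI 2 by blast
  qed
qed

lemma D2: "x \<in> car U \<Longrightarrow> F``{x} \<in> Dset V \<Longrightarrow> g (smul U (se U) x) \<noteq> bzero N
   \<Longrightarrow> x \<in> DUgamma U N g"
proof -
  assume x: "x \<in> car U" and D: "F``{x} \<in> Dset V" and nz: "g (smul U (se U) x) \<noteq> bzero N"
  have key: "x \<in> ghosts U \<or> x = w" if "(x, w) \<in> F" for w
    using that nz unfolding Frel_def by auto
  consider "F``{x} \<in> ghosts V" | Y Z Y' where "Y \<in> car V" "Z \<in> car V" "F``{x} = smul V Y Z"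
    "Y' \<in> ghosts V" "sgless V Y' (smul V (se V) Y)"
    "smul V Y' Z = smul V (smul V (se V) Y) Z"
    using D unfolding Dset_def by blast
  then show ?thesis
  proof cases
    case 1
    then obtain a where a: "a \<in> ghosts U" "F``{x} = F``{a}" using ghostsV_E by blast
    then have "(x, a) \<in> F" using cls_eq x ghostsD by blast
    then show ?thesis using key a ghost_DU by blast
  next
    case 2
    obtain y where y: "y \<in> car U" "Y = F``{y}" using 2(1) carV quotientE by metis
    obtain z where z: "z \<in> car U" "Z = F``{z}" using 2(2) carV quotientE by metis
    obtain a where a: "a \<in> ghosts U" "Y' = F``{a}" using 2(4) ghostsV_E by blast
    have ac: "a \<in> car U" using ghostsD a by simp
    have ey: "smul U (se U) y \<in> ghosts U" "smul U (se U) y \<in> car U" using ghostsI y closed e_car by auto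
    have bl: "bless N (g a) (g (smul U (se U) y))"
      using 2(5) a y eV sglessV ey by simp
    have "F``{smul U a z} = F``{smul U (smul U (se U) y) z}"
      using 2(6) a y z mulV eV ac ey by simp
    then have "(smul U a z, smul U (smul U (se U) y) z) \<in> F"
      using cls_eq closed ac z ey by simp
    then have geq: "g (smul U a z) = g (smul U (smul U (se U) y) z)"
      using Fg ghostsD ghost_mul a ey z by metis
    have "F``{x} = F``{smul U y z}" using 2(3) y z mulV by simp
    then have "(x, smul U y z) \<in> F" using cls_eq x closed y z by simp
    then have "x \<in> ghosts U \<or> x = smul U y z" using key by blast
    then show ?thesis
    proof
      assume "x \<in> ghosts U" then show ?thesis using ghost_DU by blast
    next
      assume "x = smul U y z"
      then show ?thesis unfolding DUgamma_def using y z a bl geq by blast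
    qed
  qed
qed

lemma main:
  assumes x1: "x1 \<in> car U" and x2: "x2 \<in> car U"
  shows "alpha U N g x1 = alpha U N g x2 \<longleftrightarrow>
           x1 = x2 \<or>
           (x1 \<in> DUgamma U N g \<and> x2 \<in> DUgamma U N g \<and>
              g (smul U (se U) x1) = g (smul U (se U) x2)) \<or>
           (g (smul U (se U) x1) = bzero N \<and> g (smul U (se U) x2) = bzero N)"
proof -
  let ?E = "Erel V (Dset V)"
  have al: "alpha U N g x = ?E``{F``{x}}" for x
    unfolding alpha_def sigma_def proj_def by simp
  have "alpha U N g x1 = alpha U N g x2 \<longleftrightarrow> (F``{x1}, F``{x2}) \<in> ?E"
    unfolding al by (rule eq_equiv_class_iff[OF Erel_equiv clsI[OF x1] clsI[OF x2]])
  also have "\<dots> \<longleftrightarrow> (x1, x2) \<in> F \<or> (F``{x1} \<in> Dset V \<and> F``{x2} \<in> Dset V \<and>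
       g (smul U (se U) x1) = g (smul U (se U) x2))"
    using clsI x1 x2 eV cls_eq eF_iff ghostsI closed e_car unfolding Erel_def by auto
  also have "\<dots> \<longleftrightarrow> x1 = x2 \<or>
           (x1 \<in> DUgamma U N g \<and> x2 \<in> DUgamma U N g \<and>
              g (smul U (se U) x1) = g (smul U (se U) x2)) \<or>
           (g (smul U (se U) x1) = bzero N \<and> g (smul U (se U) x2) = bzero N)"
  proof
    assume "(x1, x2) \<in> F \<or> (F``{x1} \<in> Dset V \<and> F``{x2} \<in> Dset V \<and>
       g (smul U (se U) x1) = g (smul U (se U) x2))"
    then show "x1 = x2 \<or>
           (x1 \<in> DUgamma U N g \<and> x2 \<in> DUgamma U N g \<and>
              g (smul U (se U) x1) = g (smul U (se U) x2)) \<or>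
           (g (smul U (se U) x1) = bzero N \<and> g (smul U (se U) x2) = bzero N)"
    proof
      assume "(x1, x2) \<in> F"
      then show ?thesis using ghost_DU ghostsD unfolding Frel_def by auto
    next
      assume h: "F``{x1} \<in> Dset V \<and> F``{x2} \<in> Dset V \<and>
         g (smul U (se U) x1) = g (smul U (se U) x2)"
      show ?thesis
      proof (cases "g (smul U (se U) x1) = bzero N")
        case True then show ?thesis using h by simp
      next
        case False then show ?thesis using h D2 x1 x2 by metis
      qed
    qed
  next
    assume "x1 = x2 \<or>
           (x1 \<in> DUgamma U N g \<and> x2 \<in> DUgamma U N g \<and>
              g (smul U (se U) x1) = g (smul U (se U) x2)) \<or>
           (g (smul U (se U) x1) = bzero N \<and> g (smul U (se U) x2) = bzero N)"
    then show "(x1, x2) \<in> F \<or> (F``{x1} \<in> Dset V \<and> F``{x2} \<in> Dset V \<and>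
       g (smul U (se U) x1) = g (smul U (se U) x2))"
    proof (elim disjE)
      assume "x1 = x2" then show ?thesis using x1 x2 unfolding Frel_def by auto
    next
      assume "x1 \<in> DUgamma U N g \<and> x2 \<in> DUgamma U N g \<and>
              g (smul U (se U) x1) = g (smul U (se U) x2)"
      then show ?thesis using D1 by blast
    next
      assume "g (smul U (se U) x1) = bzero N \<and> g (smul U (se U) x2) = bzero N"
      then show ?thesis using x1 x2 unfolding Frel_def by auto
    qed
  qed
  finally show ?thesis .
qed

end

theorem corollary4p10:
  fixes U :: "'a stmon" and N :: "'b bsr" and \<gamma> :: "'a \<Rightarrow> 'b"
  assumes "supertropical_semiring U"
    and "bipotent_semiring N"
    and "ghost_hom U N \<gamma>"
    and "\<gamma> ` ghosts U = bcar N"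
    and "x1 \<in> car U" and "x2 \<in> car U"
  shows "alpha U N \<gamma> x1 = alpha U N \<gamma> x2 \<longleftrightarrow>
           x1 = x2 \<or>
           (x1 \<in> DUgamma U N \<gamma> \<and> x2 \<in> DUgamma U N \<gamma> \<and>
              \<gamma> (smul U (se U) x1) = \<gamma> (smul U (se U) x2)) \<or>
           (\<gamma> (smul U (se U) x1) = bzero N \<and> \<gamma> (smul U (se U) x2) = bzero N)"
proof -
  interpret ctx U N \<gamma>
    using assms(1-3) unfolding supertropical_semiring_def by unfold_locales auto
  show ?thesis using main assms(5,6) by blast
qed

end
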